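(* Let $k\ge 3$ be an integer. There is no deterministic wait-free algorithm that solves the consensus task for $2$ processes in the asynchronous shared-memory model using only atomic read-write registers and (any number of) $\text{WRN}_{k}$ objects.
   Context: A $\text{WRN}_{k}$ (Write and Read Next) object is a deterministic atomic shared object with a single operation $\texttt{WRN}(i,v)$, where $i\in\{0,\dots,k-1\}$ and $v\neq\bot$. Its state consists of $k$ values $A[0],\dots,A[k-1]$, initially all $\bot$; the operation $\texttt{WRN}(i,v)$ atomically sets $A[i]\gets v$ and returns $A[(i+1)\bmod k]$ (i.e. the value passed in the most recent previous invocation with index $(i+1)\bmod k$, or $\bot$ if there was none). Model: asynchronous processes communicate only by applying atomic operations (steps) to shared objects; any process may crash (stop taking steps). An algorithm is wait-free if every non-crashed process produces its output in a finite number of its own steps. Consensus task: each process has an input value and every non-faulty process must output a value such that (Validity) every output is the input of some process and (Agreement) all outputs are equal. *)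

theory Defs
  imports Main
begin

text \<open>Shared objects are indexed by an arbitrary type 'o; each object is either an atomic
  read/write register holding a value of type 'v, or a WRN_k object whose state is
  an array A of k entries in 'v option (None = bottom).\<close>

datatype 'v objstate = RegS 'v | WRNS "nat \<Rightarrow> 'v option"

datatype ('o, 'v) op = Rd 'o | Wr 'o 'v | Wrn 'o nat 'v

datatype ('o, 'v, 'a) act = Decide 'a | Invoke "('o, 'v) op"

text \<open>None means the operation is not applicable to the object (wrong object kind or
  index out of range); such a step cannot be taken.\<close>
fun apply_op :: "nat \<Rightarrow> ('o \<Rightarrow> 'v objstate) \<Rightarrow> ('o, 'v) op
                  \<Rightarrow> ('v option \<times> ('o \<Rightarrow> 'v objstate)) option" where
  "apply_op k m (Rd x) = (case m x of RegS v \<Rightarrow> Some (Some v, m) | WRNS _ \<Rightarrow> None)"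
| "apply_op k m (Wr x v) = (case m x of RegS _ \<Rightarrow> Some (None, m(x := RegS v)) | WRNS _ \<Rightarrow> None)"
| "apply_op k m (Wrn x i v) = (case m x of RegS _ \<Rightarrow> None
     | WRNS A \<Rightarrow> if i < k then Some (A ((i + 1) mod k), m(x := WRNS (A(i := Some v)))) else None)"

text \<open>A deterministic algorithm: initial memory, initial local state of process p
  given its input, the next action of p in a local state, and the local state
  transition of p upon receiving a response.\<close>
record ('o, 'v, 's, 'a) protocol =
  mem0 :: "'o \<Rightarrow> 'v objstate"
  init :: "nat \<Rightarrow> 'a \<Rightarrow> 's"
  delta :: "nat \<Rightarrow> 's \<Rightarrow> ('o, 'v, 'a) act"
  upd :: "nat \<Rightarrow> 's \<Rightarrow> 'v option \<Rightarrow> 's"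

type_synonym ('o, 'v, 's) config = "('o \<Rightarrow> 'v objstate) \<times> (nat \<Rightarrow> 's)"

definition regs_and_wrn :: "('o \<Rightarrow> 'v objstate) \<Rightarrow> bool" where
  "regs_and_wrn m \<longleftrightarrow> (\<forall>x. (\<exists>v. m x = RegS v) \<or> m x = WRNS (\<lambda>_. None))"

definition decision :: "('o, 'v, 's, 'a) protocol \<Rightarrow> ('o, 'v, 's) config \<Rightarrow> nat \<Rightarrow> 'a option" where
  "decision A c p = (case delta A p (snd c p) of Decide a \<Rightarrow> Some a | Invoke _ \<Rightarrow> None)"

text \<open>One step of process p: a decided process takes no more steps; otherwise it applies
  its pending operation atomically (if the operation is not applicable the process
  is stuck).\<close>
definition step :: "nat \<Rightarrow> ('o, 'v, 's, 'a) protocol \<Rightarrow> nat \<Rightarrow> ('o, 'v, 's) config \<Rightarrow> ('o, 'v, 's) config" where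
  "step k A p c = (case delta A p (snd c p) of
      Decide _ \<Rightarrow> c
    | Invoke opr \<Rightarrow> (case apply_op k (fst c) opr of
         None \<Rightarrow> c
       | Some (r, m') \<Rightarrow> (m', (snd c)(p := upd A p (snd c p) r))))"

fun run :: "nat \<Rightarrow> ('o, 'v, 's, 'a) protocol \<Rightarrow> (nat \<Rightarrow> 'a) \<Rightarrow> (nat \<Rightarrow> nat) \<Rightarrow> nat \<Rightarrow> ('o, 'v, 's) config" where
  "run k A inp \<sigma> 0 = (mem0 A, \<lambda>p. init A p (inp p))"
| "run k A inp \<sigma> (Suc t) = step k A (\<sigma> t) (run k A inp \<sigma> t)"

text \<open>A solves 2-process consensus wait-free using registers and WRN_k objects:
  agreement and validity in every reachable configuration, and every process that
  takes infinitely many steps (i.e. does not crash) eventually decides.\<close>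
definition solves_consensus2 :: "nat \<Rightarrow> ('o, 'v, 's, 'a) protocol \<Rightarrow> bool" where
  "solves_consensus2 k A \<longleftrightarrow> regs_and_wrn (mem0 A) \<and>
    (\<forall>inp \<sigma>. (\<forall>t. \<sigma> t < 2) \<longrightarrow>
       (\<forall>t p q a b. p < 2 \<longrightarrow> q < 2 \<longrightarrow> decision A (run k A inp \<sigma> t) p = Some a
           \<longrightarrow> decision A (run k A inp \<sigma> t) q = Some b \<longrightarrow> a = b) \<and>
       (\<forall>t p a. p < 2 \<longrightarrow> decision A (run k A inp \<sigma> t) p = Some a \<longrightarrow> (\<exists>q<2. a = inp q)) \<and>
       (\<forall>p<2. (\<forall>n. \<exists>t\<ge>n. \<sigma> t = p) \<longrightarrow> (\<exists>t. decision A (run k A inp \<sigma> t) p \<noteq> None)))"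

end

theory Submission
  imports Defs
begin

lemma mod_suc_if: "(j::nat) < k \<Longrightarrow> (j + 1) mod k = (if j + 1 = k then 0 else j + 1)"
  by auto

lemma no_two_cycle:
  assumes "(i::nat) < k" "j < k" "3 \<le> k" "(j + 1) mod k = i" "(i + 1) mod k = j"
  shows False
  using assms by (auto simp add: mod_Suc split: if_splits)

lemma suc_mod_neq: "(i::nat) < k \<Longrightarrow> 2 \<le> k \<Longrightarrow> (i + 1) mod k \<noteq> i"
  by (auto simp add: mod_Suc)

lemma ops:
  assumes k: "3 \<le> k" and h0: "apply_op k m o0 = Some (r0, m0)" and h1: "apply_op k m o1 = Some (r1, m1)"
  shows "(\<exists>r0' r1' m'. apply_op k m0 o1 = Some (r1', m') \<and> apply_op k m1 o0 = Some (r0', m')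
            \<and> (r1' = r1 \<or> r0' = r0))
         \<or> apply_op k m0 o1 = Some (r1, m1) \<or> apply_op k m1 o0 = Some (r0, m0)"
proof (cases o0)
  case (Rd x)
  then have "m0 = m" using h0 by (auto split: objstate.splits)
  then show ?thesis using h1 by simp
next
  case (Wr x v)
  show ?thesis
  proof (cases o1)
    case (Rd y)
    then have "m1 = m" using h1 by (auto split: objstate.splits)
    then show ?thesis using h0 by simp
  next
    case (Wr y w)
    show ?thesis
    proof (cases "x = y")
      case True
      then show ?thesis using h0 h1 \<open>o0 = Wr x v\<close> Wr by (auto split: objstate.splits)
    next
      case False
      then show ?thesis using h0 h1 \<open>o0 = Wr x v\<close> Wr
        by (auto split: objstate.splits simp: fun_upd_twist)
    qed
  next
    case (Wrn y j w)
    show ?thesis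
    proof (cases "x = y")
      case True
      then show ?thesis using h0 h1 \<open>o0 = Wr x v\<close> Wrn by (auto split: objstate.splits)
    next
      case False
      then show ?thesis using h0 h1 \<open>o0 = Wr x v\<close> Wrn
        by (auto split: objstate.splits if_splits simp: fun_upd_twist)
    qed
  qed
next
  case (Wrn x i v)
  show ?thesis
  proof (cases o1)
    case (Rd y)
    then have "m1 = m" using h1 by (auto split: objstate.splits)
    then show ?thesis using h0 by simp
  next
    case (Wr y w)
    show ?thesis
    proof (cases "x = y")
      case True
      then show ?thesis using h0 h1 \<open>o0 = Wrn x i v\<close> Wr by (auto split: objstate.splits)
    next
      case False
      then show ?thesis using h0 h1 \<open>o0 = Wrn x i v\<close> Wr
        by (auto split: objstate.splits if_splits simp: fun_upd_twist)
    qed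
  next
    case (Wrn y j w)
    show ?thesis
    proof (cases "x = y")
      case False
      then show ?thesis using h0 h1 \<open>o0 = Wrn x i v\<close> Wrn
        by (auto split: objstate.splits if_splits simp: fun_upd_twist)
    next
      case True
      then obtain Ar where mx: "m x = WRNS Ar" and ik: "i < k" and jk: "j < k"
        and m0: "m0 = m(x := WRNS (Ar(i := Some v)))" and r0: "r0 = Ar ((i + 1) mod k)"
        and m1: "m1 = m(x := WRNS (Ar(j := Some w)))" and r1: "r1 = Ar ((j + 1) mod k)"
        using h0 h1 \<open>o0 = Wrn x i v\<close> Wrn by (auto split: objstate.splits if_splits)
      show ?thesis
      proof (cases "i = j")
        case True
        have "apply_op k m0 o1 = Some (r1, m1)"
          using True ik k suc_mod_neq[of j k] by (simp add: Wrn \<open>x = y\<close> m0 m1 r1 mx)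
        then show ?thesis by simp
      next
        case False
        have mm: "m0(x := WRNS ((Ar(i := Some v))(j := Some w))) = m1(x := WRNS ((Ar(j := Some w))(i := Some v)))"
          using False by (simp add: m0 m1 fun_upd_twist)
        show ?thesis
        proof (cases "(j + 1) mod k = i")
          case False2: False
          have "apply_op k m0 o1 = Some (r1, m0(x := WRNS ((Ar(i := Some v))(j := Some w))))"
            using False2 jk by (simp add: Wrn \<open>x = y\<close> m0 r1)
          moreover have "\<exists>r0'. apply_op k m1 o0 = Some (r0', m1(x := WRNS ((Ar(j := Some w))(i := Some v))))"
            using ik \<open>x = y\<close> by (simp add: \<open>o0 = Wrn x i v\<close> m1)
          ultimately show ?thesis using mm by metis
        next
          case True2: True
          then have ne: "(i + 1) mod k \<noteq> j" using no_two_cycle[OF ik jk k] by blast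
          have "apply_op k m1 o0 = Some (r0, m1(x := WRNS ((Ar(j := Some w))(i := Some v))))"
            using ne ik \<open>x = y\<close> by (simp add: \<open>o0 = Wrn x i v\<close> m1 r0)
          moreover have "\<exists>r1'. apply_op k m0 o1 = Some (r1', m0(x := WRNS ((Ar(i := Some v))(j := Some w))))"
            using jk \<open>x = y\<close> by (simp add: Wrn m0)
          ultimately show ?thesis using mm by metis
        qed
      qed
    qed
  qed
qed


definition exe :: "nat \<Rightarrow> ('o, 'v, 's, 'a) protocol \<Rightarrow> ('o, 'v, 's) config \<Rightarrow> nat list \<Rightarrow> ('o, 'v, 's) config" where
  "exe k A c l = foldl (\<lambda>c p. step k A p c) c l"

lemma exe_Nil[simp]: "exe k A c [] = c" by (simp add: exe_def)
lemma exe_Cons[simp]: "exe k A c (p # l) = exe k A (step k A p c) l" by (simp add: exe_def)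
lemma exe_append: "exe k A c (l @ l') = exe k A (exe k A c l) l'" by (simp add: exe_def)
lemma exe_snoc: "exe k A c (l @ [p]) = step k A p (exe k A c l)" by (simp add: exe_def)

definition c0 :: "('o, 'v, 's, 'a) protocol \<Rightarrow> (nat \<Rightarrow> 'a) \<Rightarrow> ('o, 'v, 's) config" where
  "c0 A inp = (mem0 A, \<lambda>p. init A p (inp p))"

lemma run_exe: "run k A inp \<sigma> t = exe k A (c0 A inp) (map \<sigma> [0..<t])"
  by (induction t) (simp_all add: c0_def exe_snoc)

definition sched :: "nat list \<Rightarrow> nat \<Rightarrow> nat \<Rightarrow> nat" where
  "sched l p t = (if t < length l then l ! t else p)"

lemma map_sched: "length l \<le> t \<Longrightarrow> map (sched l p) [0..<t] = l @ replicate (t - length l) p"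
  by (rule nth_equalityI) (auto simp: sched_def nth_append)

lemma sched_lt: "\<forall>x\<in>set l. x < 2 \<Longrightarrow> p < 2 \<Longrightarrow> sched l p t < 2"
  by (auto simp: sched_def)

lemma step_other: "q \<noteq> p \<Longrightarrow> snd (step k A q c) p = snd c p"
  unfolding step_def by (simp split: act.split option.split prod.split)

lemma step_decided: "delta A p (snd c p) = Decide a \<Longrightarrow> step k A p c = c"
  unfolding step_def by simp

lemma step_persist: "decision A c p = Some a \<Longrightarrow> decision A (step k A q c) p = Some a"
proof -
  assume h: "decision A c p = Some a"
  then have d: "delta A p (snd c p) = Decide a" unfolding decision_def by (simp split: act.splits)
  have "snd (step k A q c) p = snd c p"
    by (cases "q = p") (simp_all add: step_other step_decided[OF d])
  then show ?thesis using h unfolding decision_def by simp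
qed

lemma exe_persist: "decision A c p = Some a \<Longrightarrow> decision A (exe k A c l) p = Some a"
  by (induction l arbitrary: c) (auto simp: step_persist)

lemma run_persist: "t \<le> t' \<Longrightarrow> decision A (run k A inp \<sigma> t) p = Some a \<Longrightarrow> decision A (run k A inp \<sigma> t') p = Some a"
  by (induction t' rule: dec_induct) (auto simp: step_persist)

lemma step_same:
  assumes "fst c = fst c'" "snd c p = snd c' p"
  shows "fst (step k A p c) = fst (step k A p c') \<and> snd (step k A p c) p = snd (step k A p c') p"
proof (cases "delta A p (snd c p)")
  case (Decide a)
  then have "delta A p (snd c' p) = Decide a" using assms by simp
  then show ?thesis using Decide assms by (simp add: step_decided)
next
  case (Invoke opr)
  then have i': "delta A p (snd c' p) = Invoke opr" using assms by simp
  show ?thesis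
  proof (cases "apply_op k (fst c) opr")
    case None
    then have "apply_op k (fst c') opr = None" using assms by simp
    then show ?thesis using None Invoke i' assms unfolding step_def by simp
  next
    case (Some rm)
    then obtain r m' where rm: "apply_op k (fst c) opr = Some (r, m')" by (cases rm) auto
    then have "apply_op k (fst c') opr = Some (r, m')" using assms by simp
    then show ?thesis using rm Invoke i' assms unfolding step_def by simp
  qed
qed

lemma solo_same:
  assumes "fst c = fst c'" "snd c p = snd c' p"
  shows "fst (exe k A c (replicate n p)) = fst (exe k A c' (replicate n p)) \<and>
         snd (exe k A c (replicate n p)) p = snd (exe k A c' (replicate n p)) p"
  using assms
proof (induction n arbitrary: c c')
  case 0 then show ?case by simp
next
  case (Suc n)
  from step_same[OF Suc.prems, of k A] have "fst (step k A p c) = fst (step k A p c')"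
    "snd (step k A p c) p = snd (step k A p c') p" by auto
  from Suc.IH[OF this] show ?case by (simp only: replicate_Suc exe_Cons)
qed

definition okl :: "nat list \<Rightarrow> bool" where "okl l \<longleftrightarrow> (\<forall>x\<in>set l. x < 2)"

lemma okl_append[simp]: "okl (l @ l') \<longleftrightarrow> okl l \<and> okl l'" by (auto simp: okl_def)
lemma okl_simps[simp]: "okl []" "okl (p # l) \<longleftrightarrow> p < 2 \<and> okl l" "okl (replicate n p) \<longleftrightarrow> n = 0 \<or> p < 2"
  by (auto simp: okl_def)

locale cons2 =
  fixes k :: nat and A :: "('o, 'v, 's, 'a) protocol"
  assumes sol: "solves_consensus2 k A" and k3: "3 \<le> k"
begin

lemma solfact:
  assumes "\<forall>t. \<sigma> t < 2"
  shows "(\<forall>t p q a b. p < 2 \<longrightarrow> q < 2 \<longrightarrow> decision A (run k A inp \<sigma> t) p = Some a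
           \<longrightarrow> decision A (run k A inp \<sigma> t) q = Some b \<longrightarrow> a = b) \<and>
       (\<forall>t p a. p < 2 \<longrightarrow> decision A (run k A inp \<sigma> t) p = Some a \<longrightarrow> (\<exists>q<2. a = inp q)) \<and>
       (\<forall>p<2. (\<forall>n. \<exists>t\<ge>n. \<sigma> t = p) \<longrightarrow> (\<exists>t. decision A (run k A inp \<sigma> t) p \<noteq> None))"
proof -
  have "\<forall>inp \<sigma>. (\<forall>t. \<sigma> t < 2) \<longrightarrow>
       (\<forall>t p q a b. p < 2 \<longrightarrow> q < 2 \<longrightarrow> decision A (run k A inp \<sigma> t) p = Some a
           \<longrightarrow> decision A (run k A inp \<sigma> t) q = Some b \<longrightarrow> a = b) \<and>
       (\<forall>t p a. p < 2 \<longrightarrow> decision A (run k A inp \<sigma> t) p = Some a \<longrightarrow> (\<exists>q<2. a = inp q)) \<and>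
       (\<forall>p<2. (\<forall>n. \<exists>t\<ge>n. \<sigma> t = p) \<longrightarrow> (\<exists>t. decision A (run k A inp \<sigma> t) p \<noteq> None))"
    using sol unfolding solves_consensus2_def by (rule conjunct2)
  then show ?thesis using assms by blast
qed

lemma agree:
  assumes "okl l" "p < 2" "q < 2" "decision A (exe k A (c0 A inp) l) p = Some a"
    "decision A (exe k A (c0 A inp) l) q = Some b"
  shows "a = b"
proof -
  let ?\<sigma> = "sched l 0"
  have lt: "\<forall>t. ?\<sigma> t < 2" using assms(1) sched_lt by (simp add: okl_def)
  have e: "run k A inp ?\<sigma> (length l) = exe k A (c0 A inp) l"
    using map_sched[of l "length l" 0] by (simp add: run_exe)
  have "\<forall>t p q a b. p < 2 \<longrightarrow> q < 2 \<longrightarrow> decision A (run k A inp ?\<sigma> t) p = Some a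
           \<longrightarrow> decision A (run k A inp ?\<sigma> t) q = Some b \<longrightarrow> a = b"
    using solfact[OF lt] by (rule conjunct1)
  then show ?thesis using assms unfolding e[symmetric] by blast
qed

lemma valid:
  assumes "okl l" "p < 2" "decision A (exe k A (c0 A inp) l) p = Some a"
  shows "\<exists>q<2. a = inp q"
proof -
  let ?\<sigma> = "sched l 0"
  have lt: "\<forall>t. ?\<sigma> t < 2" using assms(1) sched_lt by (simp add: okl_def)
  have e: "run k A inp ?\<sigma> (length l) = exe k A (c0 A inp) l"
    using map_sched[of l "length l" 0] by (simp add: run_exe)
  have "\<forall>t p a. p < 2 \<longrightarrow> decision A (run k A inp ?\<sigma> t) p = Some a \<longrightarrow> (\<exists>q<2. a = inp q)"
    using solfact[OF lt] by blast
  then show ?thesis using assms unfolding e[symmetric] by blast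
qed

lemma termin:
  assumes "okl l" "p < 2"
  shows "\<exists>n a. decision A (exe k A (c0 A inp) (l @ replicate n p)) p = Some a"
proof -
  let ?\<sigma> = "sched l p"
  have lt: "\<forall>t. ?\<sigma> t < 2" using assms sched_lt by (simp add: okl_def)
  have inf: "\<forall>n. \<exists>t\<ge>n. ?\<sigma> t = p"
  proof
    fix n show "\<exists>t\<ge>n. ?\<sigma> t = p" by (rule exI[of _ "max n (length l)"]) (auto simp: sched_def)
  qed
  have "\<forall>p<2. (\<forall>n. \<exists>t\<ge>n. ?\<sigma> t = p) \<longrightarrow> (\<exists>t. decision A (run k A inp ?\<sigma> t) p \<noteq> None)"
    using solfact[OF lt] by blast
  then obtain t where "decision A (run k A inp ?\<sigma> t) p \<noteq> None"
    using inf assms(2) by blast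
  then obtain a where "decision A (run k A inp ?\<sigma> t) p = Some a" by auto
  then have "decision A (run k A inp ?\<sigma> (max t (length l))) p = Some a"
    using run_persist[of t "max t (length l)"] by simp
  then show ?thesis using map_sched[of l "max t (length l)" p] by (auto simp: run_exe)
qed

definition V :: "(nat \<Rightarrow> 'a) \<Rightarrow> nat list \<Rightarrow> 'a set" where
  "V inp l = {d. \<exists>ys p. p < 2 \<and> okl ys \<and> decision A (exe k A (c0 A inp) (l @ ys)) p = Some d}"

definition biv :: "(nat \<Rightarrow> 'a) \<Rightarrow> nat list \<Rightarrow> bool" where
  "biv inp l \<longleftrightarrow> (\<exists>x y. x \<noteq> y \<and> x \<in> V inp l \<and> y \<in> V inp l)"

lemma biv_nodec:
  assumes "okl l" "biv inp l" "p < 2"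
  shows "decision A (exe k A (c0 A inp) l) p = None"
proof (rule ccontr)
  assume "decision A (exe k A (c0 A inp) l) p \<noteq> None"
  then obtain a where a: "decision A (exe k A (c0 A inp) l) p = Some a" by auto
  have "d = a" if "d \<in> V inp l" for d
  proof -
    from that obtain ys q where q: "q < 2" "okl ys" "decision A (exe k A (c0 A inp) (l @ ys)) q = Some d"
      unfolding V_def by blast
    have "decision A (exe k A (c0 A inp) (l @ ys)) p = Some a"
      using exe_persist[OF a] by (simp add: exe_append)
    then show ?thesis using agree[of "l @ ys" q p inp d a] q assms by simp
  qed
  then show False using assms(2) unfolding biv_def by blast
qed

lemma V_mono: "q < 2 \<Longrightarrow> d \<in> V inp (l @ [q]) \<Longrightarrow> d \<in> V inp l"
proof -
  assume q: "q < 2" and "d \<in> V inp (l @ [q])"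
  then obtain ys p where h: "p < 2" "okl ys" "decision A (exe k A (c0 A inp) ((l @ [q]) @ ys)) p = Some d"
    unfolding V_def by blast
  then have "p < 2 \<and> okl (q # ys) \<and> decision A (exe k A (c0 A inp) (l @ (q # ys))) p = Some d"
    using q by simp
  then show ?thesis unfolding V_def by blast
qed

lemma V_split:
  assumes "\<forall>p<2. decision A (exe k A (c0 A inp) l) p = None" "d \<in> V inp l"
  shows "d \<in> V inp (l @ [0]) \<or> d \<in> V inp (l @ [1])"
proof -
  from assms(2) obtain ys p where h: "p < 2" "okl ys" "decision A (exe k A (c0 A inp) (l @ ys)) p = Some d"
    unfolding V_def by blast
  show ?thesis
  proof (cases ys)
    case Nil then show ?thesis using h assms(1) by simp
  next
    case (Cons q ys')
    then have "q = 0 \<or> q = 1" using h by auto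
    then show ?thesis using h Cons unfolding V_def by fastforce
  qed
qed

lemma V_ne: "okl l \<Longrightarrow> \<exists>d. d \<in> V inp l"
proof -
  assume "okl l"
  then obtain n a where "decision A (exe k A (c0 A inp) (l @ replicate n 0)) 0 = Some a"
    using termin[of l 0 inp] by auto
  then have "(0::nat) < 2 \<and> okl (replicate n 0) \<and> decision A (exe k A (c0 A inp) (l @ replicate n 0)) 0 = Some a"
    by simp
  then have "a \<in> V inp l" unfolding V_def by blast
  then show ?thesis by blast
qed

lemma shared:
  assumes "okl L0" "okl L1" "p < 2"
    "fst (exe k A (c0 A inp) L0) = fst (exe k A (c0 A inp) L1)"
    "snd (exe k A (c0 A inp) L0) p = snd (exe k A (c0 A inp) L1) p"
  shows "\<exists>d. d \<in> V inp L0 \<and> d \<in> V inp L1"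
proof -
  obtain n a where a: "decision A (exe k A (c0 A inp) (L0 @ replicate n p)) p = Some a"
    using termin[OF assms(1,3)] by blast
  have "snd (exe k A (exe k A (c0 A inp) L0) (replicate n p)) p = snd (exe k A (exe k A (c0 A inp) L1) (replicate n p)) p"
    using solo_same[OF assms(4,5)] by blast
  then have b: "decision A (exe k A (c0 A inp) (L1 @ replicate n p)) p = Some a"
    using a unfolding exe_append decision_def by simp
  have "p < 2 \<and> okl (replicate n p) \<and> decision A (exe k A (c0 A inp) (L0 @ replicate n p)) p = Some a"
    using a assms(3) by simp
  then have "a \<in> V inp L0" unfolding V_def by blast
  moreover have "p < 2 \<and> okl (replicate n p) \<and> decision A (exe k A (c0 A inp) (L1 @ replicate n p)) p = Some a"
    using b assms(3) by simp
  then have "a \<in> V inp L1" unfolding V_def by blast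
  ultimately show ?thesis by blast
qed

lemma init_biv:
  assumes "a \<noteq> b"
  shows "biv (\<lambda>p. if p = 0 then a else b) []"
proof -
  let ?inp = "\<lambda>p::nat. if p = 0 then a else b"
  have inV: "inp' q \<in> V ?inp []" if q: "q < 2" and iq: "?inp q = inp' q" and ic: "\<forall>p. inp' p = inp' q" for q inp'
  proof -
    obtain n d where d: "decision A (exe k A (c0 A ?inp) ([] @ replicate n q)) q = Some d"
      using termin[of "[]" q ?inp] q by force
    have "snd (exe k A (c0 A ?inp) (replicate n q)) q = snd (exe k A (c0 A inp') (replicate n q)) q"
      using solo_same[of "c0 A ?inp" "c0 A inp'" q k A n] iq by (simp add: c0_def)
    then have "decision A (exe k A (c0 A inp') (replicate n q)) q = Some d"
      using d by (simp add: decision_def)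
    then obtain q' where "d = inp' q'" using valid[of "replicate n q" q inp' d] q by auto
    then have "d = inp' q" using ic by simp
    then have "q < 2 \<and> okl (replicate n q) \<and> decision A (exe k A (c0 A ?inp) ([] @ replicate n q)) q = Some (inp' q)"
      using d q by simp
    then show ?thesis unfolding V_def by blast
  qed
  have "a \<in> V ?inp []" using inV[of 0 "\<lambda>_. a"] by simp
  moreover have "b \<in> V ?inp []" using inV[of 1 "\<lambda>_. b"] by simp
  ultimately show ?thesis using assms unfolding biv_def by blast
qed

lemma exists_critical:
  assumes "biv inp []"
  shows "\<exists>l. okl l \<and> biv inp l \<and> \<not> biv inp (l @ [0]) \<and> \<not> biv inp (l @ [1])"
proof (rule ccontr)
  assume neg: "\<not> ?thesis"
  have H: "\<exists>q. q < 2 \<and> biv inp (l @ [q])" if "okl l" "biv inp l" for l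
  proof -
    have "biv inp (l @ [0]) \<or> biv inp (l @ [1])" using that neg by blast
    then show ?thesis
    proof
      assume "biv inp (l @ [0])" then show ?thesis by (intro exI[of _ 0]) simp
    next
      assume "biv inp (l @ [1])" then show ?thesis by (intro exI[of _ 1]) simp
    qed
  qed
  define nxt where "nxt l = (SOME q. q < 2 \<and> biv inp (l @ [q]))" for l
  have nx: "nxt l < 2 \<and> biv inp (l @ [nxt l])" if "okl l" "biv inp l" for l
    unfolding nxt_def by (rule someI_ex[OF H[OF that]])
  define g where "g = rec_nat [] (\<lambda>n l. l @ [nxt l])"
  have g0: "g 0 = []" and gS: "g (Suc n) = g n @ [nxt (g n)]" for n by (simp_all add: g_def)
  have gi: "okl (g n) \<and> biv inp (g n)" for n
  proof (induction n)
    case 0 then show ?case using assms g0 by simp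
  next
    case (Suc n) then show ?case using nx[of "g n"] gS by simp
  qed
  define \<sigma> where "\<sigma> n = nxt (g n)" for n
  have lt: "\<forall>t. \<sigma> t < 2" by (simp add: \<sigma>_def gi nx)
  have mg: "map \<sigma> [0..<n] = g n" for n
    by (induction n) (simp_all add: g0 gS \<sigma>_def)
  have "\<exists>p<2. \<forall>n. \<exists>t\<ge>n. \<sigma> t = p"
  proof (rule ccontr)
    assume "\<not> ?thesis"
    moreover have "(0::nat) < 2" "(1::nat) < 2" by simp_all
    ultimately have "\<not> (\<forall>n. \<exists>t\<ge>n. \<sigma> t = 0)" "\<not> (\<forall>n. \<exists>t\<ge>n. \<sigma> t = 1)" by blast+
    then obtain n0 n1 where h0: "\<forall>t\<ge>n0. \<sigma> t \<noteq> 0" and h1: "\<forall>t\<ge>n1. \<sigma> t \<noteq> 1"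
      by auto
    then have "\<sigma> (max n0 n1) \<noteq> 0" "\<sigma> (max n0 n1) \<noteq> 1" by auto
    moreover have "\<sigma> (max n0 n1) < 2" using lt by blast
    ultimately show False by arith
  qed
  then obtain p where p: "p < 2" "\<forall>n. \<exists>t\<ge>n. \<sigma> t = p" by blast
  have "\<forall>p<2. (\<forall>n. \<exists>t\<ge>n. \<sigma> t = p) \<longrightarrow> (\<exists>t. decision A (run k A inp \<sigma> t) p \<noteq> None)"
    using solfact[OF lt] by blast
  then obtain t where "decision A (run k A inp \<sigma> t) p \<noteq> None" using p by blast
  then have "decision A (exe k A (c0 A inp) (g t)) p \<noteq> None" by (simp add: run_exe mg)
  moreover have "decision A (exe k A (c0 A inp) (g t)) p = None"
    using biv_nodec[of "g t" inp p] gi[of t] p(1) by blast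
  ultimately show False by simp
qed

lemma stuck:
  assumes "step k A q (exe k A (c0 A inp) l) = exe k A (c0 A inp) l" "biv inp l"
  shows "biv inp (l @ [q])"
proof -
  have "exe k A (c0 A inp) ((l @ [q]) @ ys) = exe k A (c0 A inp) (l @ ys)" for ys
    using assms(1) by (simp add: exe_append exe_snoc)
  then have "V inp (l @ [q]) = V inp l" unfolding V_def by simp
  then show ?thesis using assms(2) unfolding biv_def by simp
qed

lemma no_critical:
  assumes l: "okl l" and bl: "biv inp l" and n0: "\<not> biv inp (l @ [0])" and n1: "\<not> biv inp (l @ [1])"
  shows False
proof -
  define c where "c = exe k A (c0 A inp) l"
  have nd: "\<forall>p<2. decision A c p = None" unfolding c_def using biv_nodec[OF l bl] by blast
  obtain o0 where d0: "delta A 0 (snd c 0) = Invoke o0"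
    using nd[rule_format, of 0] unfolding decision_def by (auto split: act.splits)
  obtain o1 where d1: "delta A 1 (snd c 1) = Invoke o1"
    using nd[rule_format, of 1] unfolding decision_def by (auto split: act.splits)
  have "apply_op k (fst c) o0 \<noteq> None"
  proof
    assume "apply_op k (fst c) o0 = None"
    then have "step k A 0 c = c" using d0 unfolding step_def by simp
    then show False using stuck[of 0 inp l] bl n0 c_def by simp
  qed
  then obtain r0 m0 where a0: "apply_op k (fst c) o0 = Some (r0, m0)" by auto
  have "apply_op k (fst c) o1 \<noteq> None"
  proof
    assume "apply_op k (fst c) o1 = None"
    then have "step k A 1 c = c" using d1 unfolding step_def by simp
    then show False using stuck[of 1 inp l] bl n1 c_def by simp
  qed
  then obtain r1 m1 where a1: "apply_op k (fst c) o1 = Some (r1, m1)" by auto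
  have fin: False if "d \<in> V inp (l @ [0])" "d \<in> V inp (l @ [1])" for d
  proof -
    have "e = d" if "e \<in> V inp (l @ [q])" "q < 2" for e q
    proof -
      have "q = 0 \<or> q = 1" using that by auto
      then show ?thesis using n0 n1 \<open>d \<in> V inp (l @ [0])\<close> \<open>d \<in> V inp (l @ [1])\<close> \<open>e \<in> V inp (l @ [q])\<close>
        unfolding biv_def by blast
    qed
    then have "e = d" if "e \<in> V inp l" for e
      proof -
      have "\<forall>p<2. decision A (exe k A (c0 A inp) l) p = None" using nd unfolding c_def .
      from V_split[OF this that] show ?thesis using \<open>\<And>e q. e \<in> V inp (l @ [q]) \<Longrightarrow> q < 2 \<Longrightarrow> e = d\<close> by fastforce
    qed
    then show False using bl unfolding biv_def by blast
  qed
  have e0: "exe k A (c0 A inp) (l @ [0]) = (m0, (snd c)(0 := upd A 0 (snd c 0) r0))"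
    using d0 a0 by (simp add: exe_snoc c_def[symmetric] step_def)
  have e1: "exe k A (c0 A inp) (l @ [1]) = (m1, (snd c)(1 := upd A 1 (snd c 1) r1))"
    using d1 a1 by (simp add: exe_snoc c_def[symmetric] step_def)
  have e01: "exe k A (c0 A inp) (l @ [0] @ [1]) = step k A 1 (m0, (snd c)(0 := upd A 0 (snd c 0) r0))"
    using e0 by (simp only: append_assoc[symmetric] exe_snoc)
  have e10: "exe k A (c0 A inp) (l @ [1] @ [0]) = step k A 0 (m1, (snd c)(1 := upd A 1 (snd c 1) r1))"
    using e1 by (simp only: append_assoc[symmetric] exe_snoc)
  have l01: "okl (l @ [0] @ [1])" "okl (l @ [1] @ [0])" "okl (l @ [0])" "okl (l @ [1])" using l by simp_all
  have V01: "d \<in> V inp (l @ [0])" if "d \<in> V inp (l @ [0] @ [1])" for d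
    using V_mono[of 1 d inp "l @ [0]"] that by simp
  have V10: "d \<in> V inp (l @ [1])" if "d \<in> V inp (l @ [1] @ [0])" for d
    using V_mono[of 0 d inp "l @ [1]"] that by simp
  from ops[OF k3 a0 a1] show False
  proof (elim disjE)
    assume "\<exists>r0' r1' m'. apply_op k m0 o1 = Some (r1', m') \<and> apply_op k m1 o0 = Some (r0', m')
            \<and> (r1' = r1 \<or> r0' = r0)"
    then obtain r0' r1' m' where b1: "apply_op k m0 o1 = Some (r1', m')" and b0: "apply_op k m1 o0 = Some (r0', m')"
      and rr: "r1' = r1 \<or> r0' = r0" by blast
    have x01: "exe k A (c0 A inp) (l @ [0] @ [1]) = (m', (snd c)(0 := upd A 0 (snd c 0) r0, 1 := upd A 1 (snd c 1) r1'))"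
      using e01 b1 d1 by (simp add: step_def)
    have x10: "exe k A (c0 A inp) (l @ [1] @ [0]) = (m', (snd c)(1 := upd A 1 (snd c 1) r1, 0 := upd A 0 (snd c 0) r0'))"
      using e10 b0 d0 by (simp add: step_def)
    from rr obtain p where pp: "p < 2" "snd (exe k A (c0 A inp) (l @ [0] @ [1])) p = snd (exe k A (c0 A inp) (l @ [1] @ [0])) p"
    proof
      assume "r1' = r1" then show ?thesis using that[of 1] x01 x10 by simp
    next
      assume "r0' = r0" then show ?thesis using that[of 0] x01 x10 by simp
    qed
    then obtain d where "d \<in> V inp (l @ [0] @ [1])" "d \<in> V inp (l @ [1] @ [0])"
    proof -
      have "fst (exe k A (c0 A inp) (l @ [0] @ [1])) = fst (exe k A (c0 A inp) (l @ [1] @ [0]))"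
        using x01 x10 by simp
      from shared[OF l01(1,2) pp(1) this pp(2)] that show ?thesis by blast
    qed
    then show False using fin V01 V10 by blast
  next
    assume b1: "apply_op k m0 o1 = Some (r1, m1)"
    have x01: "exe k A (c0 A inp) (l @ [0] @ [1]) = (m1, (snd c)(0 := upd A 0 (snd c 0) r0, 1 := upd A 1 (snd c 1) r1))"
      using e01 b1 d1 by (simp add: step_def)
    obtain d where "d \<in> V inp (l @ [0] @ [1])" "d \<in> V inp (l @ [1])"
    proof -
      have "fst (exe k A (c0 A inp) (l @ [0] @ [1])) = fst (exe k A (c0 A inp) (l @ [1]))"
        "snd (exe k A (c0 A inp) (l @ [0] @ [1])) 1 = snd (exe k A (c0 A inp) (l @ [1])) 1"
        using x01 e1 by simp_all
      moreover have "(1::nat) < 2" by simp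
      ultimately show ?thesis using shared[OF l01(1,4)] that by blast
    qed
    then show False using fin V01 by blast
  next
    assume b0: "apply_op k m1 o0 = Some (r0, m0)"
    have x10: "exe k A (c0 A inp) (l @ [1] @ [0]) = (m0, (snd c)(1 := upd A 1 (snd c 1) r1, 0 := upd A 0 (snd c 0) r0))"
      using e10 b0 d0 by (simp add: step_def)
    obtain d where "d \<in> V inp (l @ [0])" "d \<in> V inp (l @ [1] @ [0])"
    proof -
      have "fst (exe k A (c0 A inp) (l @ [0])) = fst (exe k A (c0 A inp) (l @ [1] @ [0]))"
        "snd (exe k A (c0 A inp) (l @ [0])) 0 = snd (exe k A (c0 A inp) (l @ [1] @ [0])) 0"
        using x10 e0 by simp_all
      moreover have "(0::nat) < 2" by simp
      ultimately show ?thesis using shared[OF l01(3,2)] that by blast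
    qed
    then show False using fin V10 by blast
  qed
qed

end

theorem lemma1:
  fixes k :: nat and A :: "('o, 'v, 's, 'a) protocol"
  assumes "k \<ge> 3" and "\<exists>a b :: 'a. a \<noteq> b"
  shows "\<not> solves_consensus2 k A"
proof
  assume s: "solves_consensus2 k A"
  interpret cons2 k A using s assms(1) by unfold_locales
  obtain a b :: 'a where ab: "a \<noteq> b" using assms(2) by blast
  from exists_critical[OF init_biv[OF ab]] obtain l where
    "okl l" "biv (\<lambda>p. if p = 0 then a else b) l" "\<not> biv (\<lambda>p. if p = 0 then a else b) (l @ [0])"
    "\<not> biv (\<lambda>p. if p = 0 then a else b) (l @ [1])" by blast
  then show False using no_critical by blast
qed

end
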